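(* Let $G$ be a strongly connected digraph with $n$ nodes. Then the burning number of $G$ is at most $\left\lceil \sqrt{2n+\tfrac14}-\tfrac12\right\rceil$. This bound is sharp: for every $n\ge1$ there is a strongly connected digraph on $n$ nodes whose burning number equals $\left\lceil \sqrt{2n+\tfrac14}-\tfrac12\right\rceil$.
   Context: Burning process on a digraph $D$: a sequence $(x_1,\ldots,x_b)$ of nodes is a burning sequence for $D$ if after $b$ steps of the following process every node of $D$ is burned; the $i$-th step consists of first burning all out-neighbours of all currently burned nodes, and then burning the node $x_i$. The burning number of $D$ is the length of a shortest burning sequence. Equivalently, with $N^+_k(v)$ the set of nodes reachable from $v$ by a directed path with at most $k$ arcs, the burning number is the least $b$ such that there are nodes $v_1,\ldots,v_b$ with $V(D)=\bigcup_{i=1}^b N^+_{i-1}(v_i)$. *)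

theory Defs
  imports Complex_Main
begin

text \<open>A digraph is given by a vertex set V and an arc relation E \<subseteq> V \<times> V
  (no loops). Multiple arcs are irrelevant for burning.\<close>

definition digraph :: "'a set \<Rightarrow> ('a \<times> 'a) set \<Rightarrow> bool" where
  "digraph V E \<longleftrightarrow> E \<subseteq> V \<times> V \<and> (\<forall>x. (x, x) \<notin> E)"

definition strongly_connected :: "'a set \<Rightarrow> ('a \<times> 'a) set \<Rightarrow> bool" where
  "strongly_connected V E \<longleftrightarrow> (\<forall>u\<in>V. \<forall>w\<in>V. (u, w) \<in> E\<^sup>*)"

definition out_ball :: "('a \<times> 'a) set \<Rightarrow> nat \<Rightarrow> 'a \<Rightarrow> 'a set" where
  "out_ball E k v = {u. \<exists>j\<le>k. (v, u) \<in> E ^^ j}"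

text \<open>(x_1,...,x_b) is a burning sequence, written 0-indexed as x 0, ..., x (b-1).\<close>
definition burning_seq :: "'a set \<Rightarrow> ('a \<times> 'a) set \<Rightarrow> nat \<Rightarrow> (nat \<Rightarrow> 'a) \<Rightarrow> bool" where
  "burning_seq V E b x \<longleftrightarrow> (\<forall>i<b. x i \<in> V) \<and> V = (\<Union>i<b. out_ball E i (x i))"

definition burning_number :: "'a set \<Rightarrow> ('a \<times> 'a) set \<Rightarrow> nat" where
  "burning_number V E = (LEAST b. \<exists>x. burning_seq V E b x)"

end

theory Submission
  imports Defs
begin

lemma relpow_in_V:
  assumes "E \<subseteq> V \<times> V" "v \<in> V" "(v, u) \<in> E ^^ j"
  shows "u \<in> V"
  using assms(3)
proof (induction j arbitrary: u)
  case 0 then show ?case using assms(2) by simp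
next
  case (Suc j)
  then obtain y where "(v, y) \<in> E ^^ j" "(y, u) \<in> E" by auto
  then show ?case using assms(1) by auto
qed

lemma ball_in_V:
  assumes "E \<subseteq> V \<times> V" "v \<in> V"
  shows "out_ball E i v \<subseteq> V"
  using relpow_in_V[OF assms] unfolding out_ball_def by blast

locale tree =
  fixes R :: "'a set" and E :: "('a \<times> 'a) set" and r :: 'a and f :: "'a \<Rightarrow> 'a" and lev :: "'a \<Rightarrow> nat"
  assumes fin: "finite R" and root: "r \<in> R" and levr: "lev r = 0"
    and par: "\<And>w. w \<in> R \<Longrightarrow> w \<noteq> r \<Longrightarrow> f w \<in> R \<and> (f w, w) \<in> E \<and> Suc (lev (f w)) = lev w"
begin

lemma lev0: "x \<in> R \<Longrightarrow> lev x = 0 \<Longrightarrow> x = r"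
  using par by fastforce

lemma iter: "x \<in> R \<Longrightarrow> j \<le> lev x \<Longrightarrow> (f^^j) x \<in> R \<and> lev ((f^^j) x) = lev x - j \<and> (((f^^j) x), x) \<in> E ^^ j"
proof (induction j)
  case 0 then show ?case by simp
next
  case (Suc j)
  then have ih: "(f^^j) x \<in> R" "lev ((f^^j) x) = lev x - j" "(((f^^j) x), x) \<in> E ^^ j" by auto
  have "(f^^j) x \<noteq> r"
    using ih(2) Suc.prems levr by auto
  then have p: "f ((f^^j) x) \<in> R" "(f ((f^^j) x), (f^^j) x) \<in> E" "Suc (lev (f ((f^^j) x))) = lev ((f^^j) x)"
    using par ih(1) by auto
  have "(f ((f^^j) x), x) \<in> E ^^ Suc j" using relpow_Suc_I2[OF p(2) ih(3)] .
  then show ?case using p ih by auto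
qed

end

lemma gauss2: "2 * (\<Sum>i<k. Suc i) = k * (k + 1::nat)"
  by (induction k) auto

lemma tree_cover:
  assumes "tree R E r f lev" "2 * card R \<le> k * (k + 1)"
  shows "\<exists>x. (\<forall>i<k. x i \<in> R) \<and> R \<subseteq> (\<Union>i<k. out_ball E i (x i))"
  using assms
proof (induction k arbitrary: R)
  case 0
  interpret tree R E r f lev by fact
  from 0 have "card R = 0" by simp
  then show ?case using fin root by auto
next
  case (Suc k)
  interpret tree R E r f lev by fact
  define h where "h = Max (lev ` R)"
  have hmax: "\<And>x. x \<in> R \<Longrightarrow> lev x \<le> h" unfolding h_def using fin by simp
  show ?case
  proof (cases "h \<le> k")
    case True
    have "R \<subseteq> out_ball E k r"
    proof
      fix w assume w: "w \<in> R"
      from iter[OF w, of "lev w"] have "(f^^lev w) w \<in> R" "lev ((f^^lev w) w) = 0"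
        "((f^^lev w) w, w) \<in> E ^^ lev w" by auto
      then have "(r, w) \<in> E ^^ lev w" using lev0 by metis
      then show "w \<in> out_ball E k r" unfolding out_ball_def using hmax[OF w] True le_trans by blast
    qed
    then show ?thesis by (rule_tac x="\<lambda>_. r" in exI) (auto intro: root)
  next
    case False
    have "h \<in> lev ` R" unfolding h_def using fin root by (intro Max_in) auto
    then obtain w where w: "w \<in> R" "lev w = h" by auto
    define u where "u = (f^^k) w"
    have u: "u \<in> R" "lev u = h - k" "(u, w) \<in> E ^^ k"
      using iter[OF w(1), of k] False w(2) unfolding u_def by auto
    define T where "T = {x \<in> R. \<exists>j\<le>lev x. (f^^j) x = u}"
    define R' where "R' = R - T"
    have TR: "T \<subseteq> R" unfolding T_def by auto
    have Tball: "T \<subseteq> out_ball E k u"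
    proof
      fix x assume "x \<in> T"
      then obtain j where j: "x \<in> R" "j \<le> lev x" "(f^^j) x = u" unfolding T_def by auto
      from iter[OF j(1,2)] j(3) have "lev u = lev x - j" "(u, x) \<in> E ^^ j" by auto
      moreover have "lev x \<le> h" using hmax j(1) by auto
      ultimately have "j \<le> k" using u(2) j(2) False by linarith
      then show "x \<in> out_ball E k u" unfolding out_ball_def using \<open>(u, x) \<in> E ^^ j\<close> by auto
    qed
    have sub: "(\<lambda>j. (f^^j) w) ` {..k} \<subseteq> T"
    proof
      fix y assume "y \<in> (\<lambda>j. (f^^j) w) ` {..k}"
      then obtain j where j: "j \<le> k" "y = (f^^j) w" by auto
      have y: "y \<in> R" "lev y = h - j" using iter[OF w(1), of j] j False w(2) by auto
      have "(f^^(k-j)) y = u" unfolding u_def j(2) using j(1)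
        by (metis funpow_add le_add_diff_inverse2 comp_apply)
      moreover have "k - j \<le> lev y" using y(2) j(1) False by linarith
      ultimately show "y \<in> T" unfolding T_def using y(1) by auto
    qed
    have inj: "inj_on (\<lambda>j. (f^^j) w) {..k}"
    proof (rule inj_onI)
      fix a b assume "a \<in> {..k}" "b \<in> {..k}" "(f^^a) w = (f^^b) w"
      moreover have "lev ((f^^a) w) = h - a" "lev ((f^^b) w) = h - b"
        using iter[OF w(1), of a] iter[OF w(1), of b] \<open>a \<in> {..k}\<close> \<open>b \<in> {..k}\<close> False w(2) by auto
      ultimately show "a = b" using False by auto
    qed
    have finT: "finite T" using TR fin finite_subset by blast
    have cardT: "Suc k \<le> card T"
      using card_mono[OF finT sub] card_image[OF inj] by simp
    have rT: "r \<notin> T"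
    proof
      assume "r \<in> T"
      then obtain j where "j \<le> lev r" "(f^^j) r = u" unfolding T_def by auto
      then have "u = r" using levr by simp
      then show False using u(2) False levr by simp
    qed
    have tree': "tree R' E r f lev"
    proof
      show "finite R'" unfolding R'_def using fin by auto
      show "r \<in> R'" unfolding R'_def using root rT by auto
      show "lev r = 0" by (rule levr)
      fix x assume x: "x \<in> R'" "x \<noteq> r"
      then have xR: "x \<in> R" "x \<notin> T" unfolding R'_def by auto
      have p: "f x \<in> R" "(f x, x) \<in> E" "Suc (lev (f x)) = lev x" using par xR(1) x(2) by auto
      have "f x \<notin> T"
      proof
        assume "f x \<in> T"
        then obtain j where j: "j \<le> lev (f x)" "(f^^j) (f x) = u" unfolding T_def by auto
        have "(f^^Suc j) x = u" using j(2) by (simp add: funpow_Suc_right del: funpow.simps)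
        moreover have "Suc j \<le> lev x" using j(1) p(3) by simp
        ultimately have "x \<in> T" unfolding T_def using xR(1) by blast
        then show False using xR(2) by simp
      qed
      then show "f x \<in> R' \<and> (f x, x) \<in> E \<and> Suc (lev (f x)) = lev x"
        unfolding R'_def using p by auto
    qed
    have "card R' = card R - card T" unfolding R'_def using card_Diff_subset[OF finT TR] .
    moreover have "card T \<le> card R" using card_mono[OF fin TR] .
    ultimately have "2 * card R' \<le> k * (k + 1)" using Suc.prems(2) cardT
      by (simp add: algebra_simps)
    then obtain x where x: "\<forall>i<k. x i \<in> R'" "R' \<subseteq> (\<Union>i<k. out_ball E i (x i))"
      using Suc.IH[OF tree'] by blast
    show ?thesis
    proof (rule exI[of _ "x(k := u)"], intro conjI allI impI)
      fix i assume "i < Suc k"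
      then show "(x(k := u)) i \<in> R" using x(1) u(1) unfolding R'_def by auto
    next
      show "R \<subseteq> (\<Union>i<Suc k. out_ball E i ((x(k := u)) i))"
      proof
        fix y assume y: "y \<in> R"
        show "y \<in> (\<Union>i<Suc k. out_ball E i ((x(k := u)) i))"
        proof (cases "y \<in> T")
          case True then show ?thesis using Tball by auto
        next
          case False
          then have "y \<in> R'" unfolding R'_def using y by auto
          then obtain i where "i < k" "y \<in> out_ball E i (x i)" using x(2) by auto
          then show ?thesis by (intro UN_I[of i]) auto
        qed
      qed
    qed
  qed
qed

lemma bfs_tree:
  assumes "finite V" "r \<in> V" "E \<subseteq> V \<times> V" "\<forall>w\<in>V. (r, w) \<in> E\<^sup>*"
  shows "\<exists>f lev. tree V E r f lev"
proof -
  define lev where "lev w = (LEAST j. (r, w) \<in> E ^^ j)" for w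
  define f where "f w = (SOME y. (r, y) \<in> E ^^ (lev w - 1) \<and> (y, w) \<in> E)" for w
  have "tree V E r f lev"
  proof
    show "finite V" "r \<in> V" using assms by auto
    show "lev r = 0" unfolding lev_def by (rule Least_eq_0) simp
    fix w assume w: "w \<in> V" "w \<noteq> r"
    obtain j where "(r, w) \<in> E ^^ j" using assms(4) w(1) rtrancl_power by blast
    then have lw: "(r, w) \<in> E ^^ lev w" unfolding lev_def by (rule LeastI)
    then obtain m where m: "lev w = Suc m" using w(2) by (cases "lev w") auto
    then obtain y where "(r, y) \<in> E ^^ m" "(y, w) \<in> E" using lw by auto
    then have fw: "(r, f w) \<in> E ^^ m" "(f w, w) \<in> E"
      unfolding f_def m using someI[where P="\<lambda>y. (r, y) \<in> E ^^ m \<and> (y, w) \<in> E"] by auto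
    have "lev (f w) \<le> m" unfolding lev_def using fw(1) by (rule Least_le)
    moreover have "\<not> lev (f w) < m"
    proof
      assume a: "lev (f w) < m"
      have "(r, f w) \<in> E ^^ lev (f w)" unfolding lev_def using fw(1) by (rule LeastI)
      then have "(r, w) \<in> E ^^ Suc (lev (f w))" using fw(2) by auto
      then have "lev w \<le> Suc (lev (f w))" unfolding lev_def by (rule Least_le)
      then show False using a m by simp
    qed
    ultimately show "f w \<in> V \<and> (f w, w) \<in> E \<and> Suc (lev (f w)) = lev w"
      using fw(2) assms(3) m by auto
  qed
  then show ?thesis by blast
qed

lemma ceil_iff:
  "(\<lceil>sqrt (2 * real n + 1/4) - 1/2\<rceil> \<le> int m) \<longleftrightarrow> 2 * n \<le> m * (m + 1)"
proof -
  have "(\<lceil>sqrt (2 * real n + 1/4) - 1/2\<rceil> \<le> int m) \<longleftrightarrow> sqrt (2 * real n + 1/4) \<le> real m + 1/2"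
    by (simp only: ceiling_le_iff of_int_of_nat_eq) linarith
  also have "\<dots> \<longleftrightarrow> 2 * real n + 1/4 \<le> (real m + 1/2)^2"
    using real_le_lsqrt[of "real m + 1/2" "2 * real n + 1/4"] sqrt_le_D by auto
  also have "\<dots> \<longleftrightarrow> real (2 * n) \<le> real (m * (m + 1))"
    by (simp add: power2_eq_square algebra_simps)
  also have "\<dots> \<longleftrightarrow> 2 * n \<le> m * (m + 1)" by linarith
  finally show ?thesis .
qed

lemma upper:
  assumes "finite V" "V \<noteq> {}" "digraph V E" "strongly_connected V E" "2 * card V \<le> k * (k + 1)"
  shows "\<exists>x. burning_seq V E k x"
proof -
  obtain r where r: "r \<in> V" using assms(2) by auto
  have EV: "E \<subseteq> V \<times> V" using assms(3) unfolding digraph_def by auto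
  obtain f lev where t: "tree V E r f lev"
    using bfs_tree[OF assms(1) r EV] assms(4) r unfolding strongly_connected_def by blast
  obtain x where x: "\<forall>i<k. x i \<in> V" "V \<subseteq> (\<Union>i<k. out_ball E i (x i))"
    using tree_cover[OF t assms(5)] by blast
  have "(\<Union>i<k. out_ball E i (x i)) \<subseteq> V" using ball_in_V[OF EV] x(1) by blast
  then show ?thesis unfolding burning_seq_def using x by (intro exI[of _ x]) auto
qed

lemma part1:
  assumes "finite V" "V \<noteq> {}" "digraph V E" "strongly_connected V E"
  shows "int (burning_number V E) \<le> \<lceil>sqrt (2 * real (card V) + 1/4) - 1/2\<rceil>"
proof -
  define c where "c = \<lceil>sqrt (2 * real (card V) + 1/4) - 1/2\<rceil>"
  have "1/2 \<le> sqrt (2 * real (card V) + 1/4)"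
    by (rule real_le_rsqrt) (simp add: power2_eq_square)
  then have "sqrt (2 * real (card V) + 1/4) - 1/2 \<ge> 0" by simp
  then have c0: "c \<ge> 0" unfolding c_def by simp
  define k where "k = nat c"
  have "c \<le> int k" unfolding k_def by simp
  then have "2 * card V \<le> k * (k + 1)" using ceil_iff unfolding c_def by blast
  then obtain x where "burning_seq V E k x" using upper assms by blast
  then have "burning_number V E \<le> k" unfolding burning_number_def by (intro Least_le) blast
  then show ?thesis using c0 unfolding c_def[symmetric] k_def by linarith
qed

definition cyc :: "nat \<Rightarrow> (nat \<times> nat) set" where
  "cyc n = {(i, Suc i mod n) | i. i < n \<and> 2 \<le> n}"

lemma cyc_pow: "(v, u) \<in> cyc n ^^ j \<Longrightarrow> u = ((\<lambda>i. Suc i mod n)^^j) v"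
proof (induction j arbitrary: u)
  case 0 then show ?case by simp
next
  case (Suc j)
  then obtain y where "(v, y) \<in> cyc n ^^ j" "(y, u) \<in> cyc n" by auto
  then show ?case using Suc.IH unfolding cyc_def by auto
qed

lemma cyc_ball: "card (out_ball (cyc n) i v) \<le> Suc i"
proof -
  have "out_ball (cyc n) i v \<subseteq> (\<lambda>j. ((\<lambda>i. Suc i mod n)^^j) v) ` {..i}"
    unfolding out_ball_def using cyc_pow by blast
  then have "card (out_ball (cyc n) i v) \<le> card ((\<lambda>j. ((\<lambda>i. Suc i mod n)^^j) v) ` {..i})"
    by (intro card_mono) auto
  also have "\<dots> \<le> card {..i}" by (rule card_image_le) auto
  finally show ?thesis by simp
qed

lemma cyc_digraph: "n \<ge> 1 \<Longrightarrow> digraph {..<n} (cyc n)"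
  unfolding digraph_def cyc_def
  by (auto simp: mod_Suc split: if_splits)

lemma cyc_sc: assumes "n \<ge> 1" shows "strongly_connected {..<n} (cyc n)"
proof (cases "n = 1")
  case True then show ?thesis unfolding strongly_connected_def by auto
next
  case False
  then have n2: "2 \<le> n" using assms by simp
  have step: "(u, (u + j) mod n) \<in> (cyc n)\<^sup>*" if "u < n" for u j
  proof (induction j)
    case 0 then show ?case using that by simp
  next
    case (Suc j)
    have "((u + j) mod n, Suc ((u + j) mod n) mod n) \<in> cyc n"
      unfolding cyc_def using n2 by auto
    moreover have "Suc ((u + j) mod n) mod n = (u + Suc j) mod n" by (simp add: mod_Suc_eq)
    ultimately show ?case using Suc.IH by (metis rtrancl.rtrancl_into_rtrancl)
  qed
  show ?thesis unfolding strongly_connected_def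
  proof (intro ballI)
    fix u w assume "u \<in> {..<n}" "w \<in> {..<n}"
    then have "u < n" "w < n" by auto
    have "(u + (n - u + w)) mod n = w" using \<open>u < n\<close> \<open>w < n\<close> by simp
    then show "(u, w) \<in> (cyc n)\<^sup>*" using step[OF \<open>u < n\<close>, of "n - u + w"] by simp
  qed
qed

lemma part2:
  assumes "n \<ge> 1"
  shows "int (burning_number {..<n} (cyc n)) = \<lceil>sqrt (2 * real n + 1/4) - 1/2\<rceil>"
proof -
  let ?V = "{..<n}" and ?E = "cyc n"
  have "0 \<in> ?V" using assms by simp
  then have ne: "?V \<noteq> {}" by blast
  have le: "int (burning_number ?V ?E) \<le> \<lceil>sqrt (2 * real n + 1/4) - 1/2\<rceil>"
    using part1[OF _ ne cyc_digraph[OF assms] cyc_sc[OF assms]] by simp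
  have "\<exists>k x. burning_seq ?V ?E k x"
    using upper[OF _ ne cyc_digraph[OF assms] cyc_sc[OF assms], of "2 * n"] by auto
  then obtain x where x: "burning_seq ?V ?E (burning_number ?V ?E) x"
    unfolding burning_number_def using LeastI_ex[of "\<lambda>b. \<exists>x. burning_seq ?V ?E b x"] by blast
  define b where "b = burning_number ?V ?E"
  have "n = card (\<Union>i<b. out_ball ?E i (x i))"
    using x unfolding burning_seq_def b_def by (metis card_lessThan)
  also have "\<dots> \<le> (\<Sum>i<b. card (out_ball ?E i (x i)))" by (rule card_UN_le) auto
  also have "\<dots> \<le> (\<Sum>i<b. Suc i)" by (intro sum_mono cyc_ball)
  finally have "2 * n \<le> b * (b + 1)" using gauss2[of b] by linarith
  then have "\<lceil>sqrt (2 * real n + 1/4) - 1/2\<rceil> \<le> int b" using ceil_iff by blast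
  then show ?thesis using le unfolding b_def by linarith
qed

theorem mainTheorem7:
  shows "(\<forall>(V :: 'a set) E. finite V \<and> V \<noteq> {} \<and> digraph V E \<and> strongly_connected V E \<longrightarrow>
            int (burning_number V E) \<le> \<lceil>sqrt (2 * real (card V) + 1/4) - 1/2\<rceil>)
      \<and> (\<forall>n::nat. n \<ge> 1 \<longrightarrow> (\<exists>(V :: nat set) E. finite V \<and> card V = n \<and> digraph V E \<and>
            strongly_connected V E \<and>
            int (burning_number V E) = \<lceil>sqrt (2 * real n + 1/4) - 1/2\<rceil>))"
proof (intro conjI allI impI)
  fix V :: "'a set" and E
  assume "finite V \<and> V \<noteq> {} \<and> digraph V E \<and> strongly_connected V E"
  then show "int (burning_number V E) \<le> \<lceil>sqrt (2 * real (card V) + 1/4) - 1/2\<rceil>"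
    using part1 by blast
next
  fix n :: nat assume n: "n \<ge> 1"
  show "\<exists>(V :: nat set) E. finite V \<and> card V = n \<and> digraph V E \<and>
            strongly_connected V E \<and>
            int (burning_number V E) = \<lceil>sqrt (2 * real n + 1/4) - 1/2\<rceil>"
    by (rule exI[of _ "{..<n}"], rule exI[of _ "cyc n"])
       (simp add: cyc_digraph[OF n] cyc_sc[OF n] part2[OF n])
qed

end
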